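(* Let $0<\lambda\le1$ and $f\in\mathcal U(\lambda)$ with $\dfrac{z}{f(z)}=1+\sum_{k=1}^\infty b_kz^k$ in $\mathbb D$. Define $g$ by $$\frac{z}{g(z)}=1+\sum_{k=1}^\infty \operatorname{Re}\{b_k\}\,z^k,\qquad z\in\mathbb D.$$ If $z/g(z)\ne0$ for all $z\in\mathbb D$, then $g\in\mathcal U(\lambda)$.
   Context: $\mathbb D=\{z\in\mathbb C:|z|<1\}$. $\mathcal A$ is the class of functions $f$ analytic in $\mathbb D$ with $f(z)=z+\sum_{k\ge2}a_kz^k$. For $f\in\mathcal A$ with $f(z)\ne0$ for $z\in\mathbb D\setminus\{0\}$, set $U_f(z)=\left(\frac{z}{f(z)}\right)^2f'(z)-1$. For $0<\lambda\le1$, $\mathcal U(\lambda)$ is the class of such $f\in\mathcal A$ with $|U_f(z)|<\lambda$ for all $z\in\mathbb D$. *)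

theory Defs
  imports "HOL-Analysis.Analysis"
begin

abbreviation unit_disk :: "complex set" where
  "unit_disk \<equiv> ball 0 1"

definition classA :: "(complex \<Rightarrow> complex) \<Rightarrow> bool" where
  "classA f \<longleftrightarrow> f analytic_on unit_disk \<and> f 0 = 0 \<and> deriv f 0 = 1"

text \<open>The function z/f(z), with its removable value 1 at z = 0 (since f(0)=0, f'(0)=1).\<close>
definition zdivf :: "(complex \<Rightarrow> complex) \<Rightarrow> complex \<Rightarrow> complex" where
  "zdivf f z = (if z = 0 then 1 else z / f z)"

definition Uf :: "(complex \<Rightarrow> complex) \<Rightarrow> complex \<Rightarrow> complex" where
  "Uf f z = (zdivf f z)^2 * deriv f z - 1"

definition classU :: "real \<Rightarrow> (complex \<Rightarrow> complex) \<Rightarrow> bool" where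
  "classU lam f \<longleftrightarrow> classA f \<and> (\<forall>z\<in>unit_disk - {0}. f z \<noteq> 0)
      \<and> (\<forall>z\<in>unit_disk. cmod (Uf f z) < lam)"

end

theory Submission
  imports Defs "HOL-Complex_Analysis.Complex_Analysis"
begin

theorem mainTheorem13:
  fixes f :: "complex \<Rightarrow> complex" and b :: "nat \<Rightarrow> complex" and lam :: real
  assumes "0 < lam" and "lam \<le> 1"
    and "classU lam f"
    and "\<forall>z\<in>unit_disk. (\<lambda>k. b (Suc k) * z ^ Suc k) sums (zdivf f z - 1)"
    and "\<forall>z\<in>unit_disk. 1 + (\<Sum>k. complex_of_real (Re (b (Suc k))) * z ^ Suc k) \<noteq> 0"
  shows "classU lam (\<lambda>z. z / (1 + (\<Sum>k. complex_of_real (Re (b (Suc k))) * z ^ Suc k)))"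
proof -
  define D where "D = (unit_disk :: complex set)"
  have oD: "open D" unfolding D_def by simp
  have cD: "cnj z \<in> D" if "z \<in> D" for z using that by (simp add: D_def)
  have fA: "f analytic_on D" "f 0 = 0" and fnz: "\<And>z. z \<in> D \<Longrightarrow> z \<noteq> 0 \<Longrightarrow> f z \<noteq> 0"
    and fU: "\<And>z. z \<in> D \<Longrightarrow> cmod (Uf f z) < lam"
    using assms(3) unfolding classU_def classA_def D_def by auto
  define P where "P z = 1 + (\<Sum>k. b (Suc k) * z ^ Suc k)" for z
  define T where "T z = (\<Sum>k. complex_of_real (Re (b (Suc k))) * z ^ Suc k)" for z
  define Q where "Q z = (P z + cnj (P (cnj z))) / 2" for z
  have Sums: "(\<lambda>k. b (Suc k) * z ^ Suc k) sums (P z - 1)" if "z \<in> D" for z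
  proof -
    have "(\<lambda>k. b (Suc k) * z ^ Suc k) sums (zdivf f z - 1)" using assms(4) that D_def by auto
    then show ?thesis unfolding P_def using sums_unique by fastforce
  qed
  have Pz: "P z = zdivf f z" if "z \<in> D" for z
  proof -
    have "(\<lambda>k. b (Suc k) * z ^ Suc k) sums (zdivf f z - 1)" using assms(4) that D_def by auto
    moreover have "(\<lambda>k. b (Suc k) * z ^ Suc k) sums (P z - 1)" using Sums that by auto
    ultimately have "zdivf f z - 1 = P z - 1" using sums_unique2 by blast
    then show ?thesis by simp
  qed
  have Phol: "P holomorphic_on D"
  proof -
    define a where "a n = (if n = 0 then 1 else b n)" for n
    have "(\<lambda>n. a n * (w - 0) ^ n) sums P w" if "w \<in> ball 0 1" for w
    proof -
      have "(\<lambda>n. a (Suc n) * (w - 0) ^ Suc n) sums (P w - 1)"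
        using Sums[of w] that by (simp add: a_def D_def)
      then have "(\<lambda>n. a n * (w - 0) ^ n) sums (P w - 1 + a 0 * (w-0)^0)"
        by (subst (asm) sums_Suc_iff)
      then show ?thesis by (simp add: a_def)
    qed
    then show ?thesis unfolding D_def by (rule power_series_holomorphic)
  qed
  have Pd: "(P has_field_derivative deriv P z) (at z)" if "z \<in> D" for z
    using holomorphic_derivI[OF Phol oD that] .
  have Qd: "(Q has_field_derivative (deriv P z + cnj (deriv P (cnj z))) / 2) (at z)" if "z \<in> D" for z
  proof -
    have "((cnj \<circ> P \<circ> cnj) has_field_derivative cnj (deriv P (cnj z))) (at z)"
      using has_field_derivative_cnj_cnj[OF Pd[OF cD[OF that]]] by simp
    then have "((\<lambda>z. cnj (P (cnj z))) has_field_derivative cnj (deriv P (cnj z))) (at z)"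
      by (simp add: o_def)
    then show ?thesis unfolding Q_def
      using Pd[OF that] by (auto intro!: derivative_eq_intros)
  qed
  have QT: "Q z = 1 + T z" if "z \<in> D" for z
  proof -
    have s1: "(\<lambda>k. b (Suc k) * z ^ Suc k) sums (P z - 1)" using Sums that by auto
    have "(\<lambda>k. b (Suc k) * (cnj z) ^ Suc k) sums (P (cnj z) - 1)" using Sums cD that by auto
    then have s2: "(\<lambda>k. cnj (b (Suc k)) * z ^ Suc k) sums (cnj (P (cnj z)) - 1)"
      by (subst (asm) sums_cnj[symmetric]) simp
    have "(\<lambda>k. (b (Suc k) * z ^ Suc k + cnj (b (Suc k)) * z ^ Suc k) / 2) sums
           ((P z - 1 + (cnj (P (cnj z)) - 1)) / 2)"
      by (intro sums_divide sums_add s1 s2)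
    moreover have "(b (Suc k) * z ^ Suc k + cnj (b (Suc k)) * z ^ Suc k) / 2 =
          complex_of_real (Re (b (Suc k))) * z ^ Suc k" for k
    proof -
      have "b (Suc k) + cnj (b (Suc k)) = 2 * complex_of_real (Re (b (Suc k)))"
        by (simp add: complex_add_cnj)
      then have "b (Suc k) * z ^ Suc k + cnj (b (Suc k)) * z ^ Suc k
          = 2 * complex_of_real (Re (b (Suc k))) * z ^ Suc k"
        by (metis distrib_right)
      then show ?thesis by simp
    qed
    ultimately have "(\<lambda>k. complex_of_real (Re (b (Suc k))) * z ^ Suc k) sums
           ((P z - 1 + (cnj (P (cnj z)) - 1)) / 2)" by simp
    then have "T z = (P z - 1 + (cnj (P (cnj z)) - 1)) / 2" unfolding T_def by (rule sums_unique[symmetric])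
    then show ?thesis unfolding Q_def by (simp add: field_simps)
  qed
  have Qnz: "Q z \<noteq> 0" if "z \<in> D" for z using QT[OF that] assms(5) that D_def T_def by auto
  have Pnz: "P z \<noteq> 0" if "z \<in> D" for z
    using Pz[OF that] fnz[OF that] by (cases "z = 0") (auto simp: zdivf_def)
  have fP: "f z = z / P z" if "z \<in> D" for z
  proof (cases "z = 0")
    case True then show ?thesis using fA(2) by simp
  next
    case False
    then have "P z = z / f z" using Pz[OF that] by (simp add: zdivf_def)
    then show ?thesis using fnz[OF that False] False by simp
  qed
  have fd: "deriv f z = (P z - z * deriv P z) / (P z)^2" if "z \<in> D" for z
  proof -
    have "((\<lambda>z. z / P z) has_field_derivative (P z - z * deriv P z) / (P z)^2) (at z)"
      by (rule derivative_eq_intros Pd that | use Pnz[OF that] in \<open>auto simp: power2_eq_square field_simps\<close>)+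
    then have "(f has_field_derivative (P z - z * deriv P z) / (P z)^2) (at z)"
      by (rule has_field_derivative_transform_within_open[OF _ oD that]) (use fP in auto)
    then show ?thesis by (rule DERIV_imp_deriv)
  qed
  have UfP: "Uf f z = P z - z * deriv P z - 1" if "z \<in> D" for z
    using Pnz[OF that] by (simp add: Uf_def Pz[OF that, symmetric] fd[OF that] power2_eq_square field_simps)
  define g where "g = (\<lambda>z. z / (1 + (\<Sum>k. complex_of_real (Re (b (Suc k))) * z ^ Suc k)))"
  have gQ: "g z = z / Q z" if "z \<in> D" for z using QT[OF that] unfolding g_def T_def by simp
  have gd: "(g has_field_derivative (Q z - z * ((deriv P z + cnj (deriv P (cnj z))) / 2)) / (Q z)^2) (at z)"
    if "z \<in> D" for z
  proof -
    have "((\<lambda>z. z / Q z) has_field_derivative (Q z - z * ((deriv P z + cnj (deriv P (cnj z))) / 2)) / (Q z)^2) (at z)"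
      by (rule derivative_eq_intros Qd that | use Qnz[OF that] in \<open>auto simp: power2_eq_square field_simps\<close>)+
    then show ?thesis
      by (rule has_field_derivative_transform_within_open[OF _ oD that]) (use gQ in auto)
  qed
  have T0: "T 0 = 0" unfolding T_def by simp
  have D0: "0 \<in> D" unfolding D_def by simp
  have Q0: "Q 0 = 1" using QT[OF D0] T0 by simp
  have ghol: "g holomorphic_on D"
    using gd unfolding holomorphic_on_def field_differentiable_def
    by (metis at_within_open has_field_derivative_at_within oD)
  have zg: "zdivf g z = Q z" if "z \<in> D" for z
    using Qnz[OF that] gQ[OF that] Q0 by (auto simp: zdivf_def)
  have UfQ: "Uf g z = (Uf f z + cnj (Uf f (cnj z))) / 2" if "z \<in> D" for z
  proof -
    have "Uf g z = Q z - z * ((deriv P z + cnj (deriv P (cnj z))) / 2) - 1"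
      using Qnz[OF that] DERIV_imp_deriv[OF gd[OF that]]
      by (simp add: Uf_def zg[OF that] power2_eq_square field_simps)
    moreover have e2: "cnj (P (cnj z)) = cnj (Uf f (cnj z)) + z * cnj (deriv P (cnj z)) + 1"
      using UfP[OF cD[OF that]] by simp
    moreover have e1: "P z = Uf f z + z * deriv P z + 1" using UfP[OF that] by simp
    ultimately have "Uf g z * 4 = (Uf f z + cnj (Uf f (cnj z))) * 2" unfolding Q_def e1 e2
      by (simp add: field_simps)
    then have "(Uf g z * 2) * 2 = (Uf f z + cnj (Uf f (cnj z))) * 2" by (simp add: mult.assoc)
    then have "Uf g z * 2 = Uf f z + cnj (Uf f (cnj z))"
      by (metis mult_cancel_right zero_neq_numeral)
    then show ?thesis by (simp add: field_simps)
  qed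
  show ?thesis
    unfolding g_def[symmetric] classU_def classA_def D_def[symmetric]
  proof (intro conjI ballI)
    show "g analytic_on D" using ghol oD by (simp add: analytic_on_open)
    show "g 0 = 0" unfolding g_def by simp
    show "deriv g 0 = 1" using DERIV_imp_deriv[OF gd[OF D0]] Q0 by simp
    fix z assume z: "z \<in> D - {0}"
    then show "g z \<noteq> 0" using gQ Qnz by auto
  next
    fix z assume z: "z \<in> D"
    have "cmod (Uf g z) = cmod (Uf f z + cnj (Uf f (cnj z))) / 2"
      unfolding UfQ[OF z] norm_divide by simp
    also have "\<dots> \<le> (cmod (Uf f z) + cmod (cnj (Uf f (cnj z)))) / 2"
      using norm_triangle_ineq[of "Uf f z" "cnj (Uf f (cnj z))"] by simp
    also have "\<dots> < lam" using fU[OF z] fU[OF cD[OF z]] by simp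
    finally show "cmod (Uf g z) < lam" .
  qed
qed

end
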